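(* Let $E$ be a finite extension of $\mathbf Q_p$ with ring of integers $O_E$. Let $\chi_{y,A}:A\to E$ be an ordinary character with values $(y_1,y_2,y_3)$ at $(Y_1,Y_2,Y_3)$. For $w\in\mathcal S_3$, define numbers $q(w,y)$ as follows: - $q(1,y)=1$; - $q(s_1,y)=1$ if $y_2^{-1}\in O_E$, and $q(s_1,y)=y_2^{-1}$ if $y_2\in O_E$; - $q(s_2,y)=y_2$ if $y_2^{-1}\in O_E$, and $q(s_2,y)=1$ if $y_2\in O_E$; - $q(s_1s_2,y)=q^{-1}y_1y_2$; - $q(s_2s_1,y)=q^{-1}y_1$; - $q(s_1s_2s_1,y)=q^{-1}y_1y_2$ if $y_2^{-1}\in O_E$, and $q(s_1s_2s_1,y)=q^{-1}y_1$ if $y_2\in O_E$. When $y_2$ is a unit, either of the two prescribed values may be used, consistently across $s_1,s_2,s_1s_2s_1$. Let $\Phi=1\otimes1$ be the canonical generator of $I_A(\chi_{y,A})$, and let $L(\chi_{y,A})$ be the $O_E$-submodule of $I_A(\chi_{y,A})$ that is free with basis $\{q(w,y)T_w\Phi\}_{w\in\mathcal S_3}$. Then $L(\chi_{y,A})=H_{O_E}\Phi$. In particular, $L(\chi_{y,A})$ is stable under $H_{O_E}$ and is an $O_E$-integral structure of $I_A(\chi_{y,A})$ (the canonical one).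
   Context: Let $q$ be a power of $p$, namely the residue cardinality of a non-archimedean local field $F$. Let $H$ be the $\mathbf Z[q]$-algebra ($q$ an indeterminate) generated by $T^{\pm1},S_1$ with relations $$(S_1+1)(S_1-q)=0,\quad T^3S_1=S_1T^3,\quad S_1S_2S_1=S_2S_1S_2,\quad TS_2=S_1T.$$ For a commutative ring $R$ with a map $\mathbf Z[q]\to R$, set $H_R=H\otimes_{\mathbf Z[q]}R$; for $R=E$ or $O_E$, the indeterminate $q$ is sent to the integer $q$. In $H\otimes\mathbf Z[q^{\pm1}]$, the elements $S_i$ are invertible, and one puts $$Y_1=qS_1^{-1}S_2^{-1}T,\qquad Y_2=S_2^{-1}TS_1,\qquad Y_3=q^{-1}TS_1S_2.$$ Let $A$ be the commutative subalgebra generated over $\mathbf Z[q^{\pm1}]$ by $Y_i^{\pm1}$; it is a Laurent polynomial algebra in the $Y_i$. A character $\chi:A\to E$ is a ring morphism sending $q$ to $q$, and it is determined by its values $(y_1,y_2,y_3)$. The standard module is $I_A(\chi)=H_E\otimes_{A,\chi}E$; it is 6-dimensional, and its canonical generator is $\Phi=1\otimes1$. The character $\chi$ is called ordinary if $\chi(A\cap H)\subset O_E$ (equivalently, $(y_1y_2y_3)^{\pm1}$, $q(y_iy_j)^{\pm1}$ and $qy_i^{\pm1}$ lie in $O_E$ for $i\neq j$) and moreover $y_1\in O_E$ and $y_3^{-1}\in O_E$. $\mathcal S_3$ is the Coxeter group with generators $s_1,s_2$ and length function $\ell$. One sets $T_{s_i}=S_i$ and $T_{ww'}=T_wT_{w'}$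 whenever $\ell(ww')=\ell(w)+\ell(w')$. An $O_E$-integral structure of a finite-dimensional $H_E$-module $M$ is a free $O_E$-submodule which is $H_{O_E}$-stable and contains an $E$-basis of $M$. *)

theory Defs
  imports Main HOL.Vector_Spaces "HOL-Computational_Algebra.Primes"
begin

text \<open>A finite extension of Q_p is (up to isomorphism) the same thing as a field of
characteristic 0, complete with respect to a discrete valuation, whose residue field is
finite of characteristic p.  The valuation v is normalised (surjective onto the integers);
its value at 0 is irrelevant (0 is treated separately).\<close>

definition p_adic_local_field :: "('e::field_char_0 \<Rightarrow> int) \<Rightarrow> nat \<Rightarrow> bool" where
  "p_adic_local_field v p \<longleftrightarrow>
     prime p \<and>
     (\<forall>x y. x \<noteq> 0 \<longrightarrow> y \<noteq> 0 \<longrightarrow> v (x * y) = v x + v y) \<and>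
     (\<forall>x y. x \<noteq> 0 \<longrightarrow> y \<noteq> 0 \<longrightarrow> x + y \<noteq> 0 \<longrightarrow> v (x + y) \<ge> min (v x) (v y)) \<and>
     (\<exists>\<pi>. \<pi> \<noteq> 0 \<and> v \<pi> = 1) \<and>
     v (of_nat p) > 0 \<and>
     (\<exists>R. finite R \<and> (\<forall>x. (x = 0 \<or> v x \<ge> 0) \<longrightarrow> (\<exists>r\<in>R. x = r \<or> v (x - r) > 0))) \<and>
     (\<forall>s :: nat \<Rightarrow> 'e.
        (\<forall>N::int. \<exists>M. \<forall>m\<ge>M. \<forall>n\<ge>M. s m = s n \<or> v (s m - s n) \<ge> N) \<longrightarrow>
        (\<exists>l. \<forall>N::int. \<exists>M. \<forall>n\<ge>M. s n = l \<or> v (s n - l) \<ge> N))"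

definition ring_of_integers :: "('e::field \<Rightarrow> int) \<Rightarrow> 'e set" where
  "ring_of_integers v = {x. x = 0 \<or> v x \<ge> 0}"

datatype s3 = W1 | Ws1 | Ws2 | Ws1s2 | Ws2s1 | Ws1s2s1

lemma UNIV_s3: "(UNIV :: s3 set) = {W1, Ws1, Ws2, Ws1s2, Ws2s1, Ws1s2s1}"
  using s3.exhaust by auto

instance s3 :: finite
  by standard (simp add: UNIV_s3)

text \<open>An H_E-module is an E-vector space with operators S1, T, Ti (= T^{-1}).
S2 is determined by T S2 = S1 T.\<close>

definition hS2 :: "('m \<Rightarrow> 'm) \<Rightarrow> ('m \<Rightarrow> 'm) \<Rightarrow> ('m \<Rightarrow> 'm) \<Rightarrow> 'm \<Rightarrow> 'm" where
  "hS2 S1 T Ti x = Ti (S1 (T x))"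

text \<open>Inverse of S_i, using S^2 = (q-1) S + q, i.e. S^{-1} = q^{-1}(S - (q-1)).\<close>
definition hSinv :: "('e::field \<Rightarrow> 'm::ab_group_add \<Rightarrow> 'm) \<Rightarrow> 'e \<Rightarrow> ('m \<Rightarrow> 'm) \<Rightarrow> 'm \<Rightarrow> 'm" where
  "hSinv scale q S x = scale (inverse q) (S x - scale (q - 1) x)"

definition hY1 where
  "hY1 scale q S1 T Ti x = scale q (hSinv scale q S1 (hSinv scale q (hS2 S1 T Ti) (T x)))"
definition hY2 where
  "hY2 scale q S1 T Ti x = hSinv scale q (hS2 S1 T Ti) (T (S1 x))"
definition hY3 where
  "hY3 scale q S1 T Ti x = scale (inverse q) (T (S1 (hS2 S1 T Ti x)))"

definition hecke_module ::
  "('e::field \<Rightarrow> 'm::ab_group_add \<Rightarrow> 'm) \<Rightarrow> 'e \<Rightarrow> ('m \<Rightarrow> 'm) \<Rightarrow> ('m \<Rightarrow> 'm) \<Rightarrow> ('m \<Rightarrow> 'm) \<Rightarrow> bool" where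
  "hecke_module scale q S1 T Ti \<longleftrightarrow>
     vector_space scale \<and>
     module_hom scale scale S1 \<and>
     module_hom scale scale T \<and>
     module_hom scale scale Ti \<and>
     (\<forall>x. T (Ti x) = x) \<and> (\<forall>x. Ti (T x) = x) \<and>
     (\<forall>x. S1 (S1 x) = scale (q - 1) (S1 x) + scale q x) \<and>
     (\<forall>x. T (T (T (S1 x))) = S1 (T (T (T x)))) \<and>
     (\<forall>x. S1 (hS2 S1 T Ti (S1 x)) = hS2 S1 T Ti (S1 (hS2 S1 T Ti x)))"

fun hTw :: "('m \<Rightarrow> 'm) \<Rightarrow> ('m \<Rightarrow> 'm) \<Rightarrow> ('m \<Rightarrow> 'm) \<Rightarrow> s3 \<Rightarrow> 'm \<Rightarrow> 'm" where
  "hTw S1 T Ti W1 x = x"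
| "hTw S1 T Ti Ws1 x = S1 x"
| "hTw S1 T Ti Ws2 x = hS2 S1 T Ti x"
| "hTw S1 T Ti Ws1s2 x = S1 (hS2 S1 T Ti x)"
| "hTw S1 T Ti Ws2s1 x = hS2 S1 T Ti (S1 x)"
| "hTw S1 T Ti Ws1s2s1 x = S1 (hS2 S1 T Ti (S1 x))"

inductive_set orbit_vecs :: "('m \<Rightarrow> 'm) \<Rightarrow> ('m \<Rightarrow> 'm) \<Rightarrow> ('m \<Rightarrow> 'm) \<Rightarrow> 'm \<Rightarrow> 'm set"
  for S1 T Ti \<Phi> where
  base: "\<Phi> \<in> orbit_vecs S1 T Ti \<Phi>"
| stepS: "x \<in> orbit_vecs S1 T Ti \<Phi> \<Longrightarrow> S1 x \<in> orbit_vecs S1 T Ti \<Phi>"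
| stepT: "x \<in> orbit_vecs S1 T Ti \<Phi> \<Longrightarrow> T x \<in> orbit_vecs S1 T Ti \<Phi>"
| stepTi: "x \<in> orbit_vecs S1 T Ti \<Phi> \<Longrightarrow> Ti x \<in> orbit_vecs S1 T Ti \<Phi>"

inductive_set O_span :: "('e \<Rightarrow> 'm::ab_group_add \<Rightarrow> 'm) \<Rightarrow> 'e set \<Rightarrow> 'm set \<Rightarrow> 'm set"
  for scale OE X where
  zero: "0 \<in> O_span scale OE X"
| smul: "a \<in> OE \<Longrightarrow> x \<in> X \<Longrightarrow> scale a x \<in> O_span scale OE X"
| add: "x \<in> O_span scale OE X \<Longrightarrow> y \<in> O_span scale OE X \<Longrightarrow> x + y \<in> O_span scale OE X"

text \<open>H_{O_E} Phi: the image of H_{O_E} applied to Phi, i.e. the O_E-span of all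
monomials in T^{\<plusminus>1}, S1 applied to Phi.\<close>
definition HO_Phi where
  "HO_Phi scale OE S1 T Ti \<Phi> = O_span scale OE (orbit_vecs S1 T Ti \<Phi>)"

text \<open>The numbers q(w,y).  The flag b selects the branch: b = True means the
branch "y2^{-1} in O_E", b = False the branch "y2 in O_E".\<close>
fun qwy :: "bool \<Rightarrow> 'e::field \<Rightarrow> 'e \<Rightarrow> 'e \<Rightarrow> s3 \<Rightarrow> 'e" where
  "qwy b q y1 y2 W1 = 1"
| "qwy b q y1 y2 Ws1 = (if b then 1 else inverse y2)"
| "qwy b q y1 y2 Ws2 = (if b then y2 else 1)"
| "qwy b q y1 y2 Ws1s2 = inverse q * y1 * y2"
| "qwy b q y1 y2 Ws2s1 = inverse q * y1"
| "qwy b q y1 y2 Ws1s2s1 = (if b then inverse q * y1 * y2 else inverse q * y1)"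

definition L_lattice where
  "L_lattice scale OE b q y1 y2 S1 T Ti \<Phi> =
     {(\<Sum>w\<in>UNIV. scale (c w * qwy b q y1 y2 w) (hTw S1 T Ti w \<Phi>)) | c. \<forall>w. c w \<in> OE}"

definition ordinary :: "'e::field set \<Rightarrow> 'e \<Rightarrow> 'e \<Rightarrow> 'e \<Rightarrow> 'e \<Rightarrow> bool" where
  "ordinary OE q y1 y2 y3 \<longleftrightarrow>
     y1 * y2 * y3 \<in> OE \<and> inverse (y1 * y2 * y3) \<in> OE \<and>
     q * (y1 * y2) \<in> OE \<and> q * inverse (y1 * y2) \<in> OE \<and>
     q * (y1 * y3) \<in> OE \<and> q * inverse (y1 * y3) \<in> OE \<and>
     q * (y2 * y3) \<in> OE \<and> q * inverse (y2 * y3) \<in> OE \<and>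
     q * y1 \<in> OE \<and> q * inverse y1 \<in> OE \<and>
     q * y2 \<in> OE \<and> q * inverse y2 \<in> OE \<and>
     q * y3 \<in> OE \<and> q * inverse y3 \<in> OE \<and>
     y1 \<in> OE \<and> inverse y3 \<in> OE"

end

theory Submission imports Defs begin

lemma sum_s3: "(\<Sum>w\<in>UNIV. f w) = f W1 + f Ws1 + f Ws2 + f Ws1s2 + f Ws2s1 + f Ws1s2s1"
  by (simp add: UNIV_s3 add_ac)

locale hk = vector_space scale for scale :: "'e::field \<Rightarrow> 'm::ab_group_add \<Rightarrow> 'm" +
  fixes q :: 'e and S1 T Ti :: "'m \<Rightarrow> 'm" and \<Phi> :: 'm and y1 y2 y3 :: 'e
  assumes S1_add: "\<And>x y. S1 (x + y) = S1 x + S1 y" and S1_scale: "\<And>a x. S1 (scale a x) = scale a (S1 x)"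
  and T_add: "\<And>x y. T (x + y) = T x + T y" and T_scale: "\<And>a x. T (scale a x) = scale a (T x)"
  and Ti_add: "\<And>x y. Ti (x + y) = Ti x + Ti y" and Ti_scale: "\<And>a x. Ti (scale a x) = scale a (Ti x)"
  and TTi: "\<And>x. T (Ti x) = x" and TiT: "\<And>x. Ti (T x) = x"
  and quad: "\<And>x. S1 (S1 x) = scale (q - 1) (S1 x) + scale q x"
  and braid: "\<And>x. S1 (hS2 S1 T Ti (S1 x)) = hS2 S1 T Ti (S1 (hS2 S1 T Ti x))"
  and q0: "q \<noteq> 0"
  and Y1: "hY1 scale q S1 T Ti \<Phi> = scale y1 \<Phi>"
  and Y2: "hY2 scale q S1 T Ti \<Phi> = scale y2 \<Phi>"
  and Y3: "hY3 scale q S1 T Ti \<Phi> = scale y3 \<Phi>"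
  and Phi0: "\<Phi> \<noteq> 0"
begin

abbreviation "S2 \<equiv> hS2 S1 T Ti"

lemma S2_add: "S2 (x + y) = S2 x + S2 y"
  by (simp add: hS2_def S1_add T_add Ti_add)
lemma S2_scale: "S2 (scale a x) = scale a (S2 x)"
  by (simp add: hS2_def S1_scale T_scale Ti_scale)
lemma S2_quad: "S2 (S2 x) = scale (q - 1) (S2 x) + scale q x"
  by (simp add: hS2_def TTi quad Ti_add Ti_scale TiT)

lemma Sinv_right:
  assumes a: "\<And>x y. S (x + y) = S x + S y" and s: "\<And>a x. S (scale a x) = scale a (S x)"
    and qd: "\<And>x. S (S x) = scale (q - 1) (S x) + scale q x"
  shows "S (hSinv scale q S x) = x"
proof -
  have d: "S (u - w) = S u - S w" for u w
    by (metis a diff_add_cancel eq_diff_eq)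
  show ?thesis unfolding hSinv_def
    by (simp add: s d qd scale_scale q0)
qed

lemma S1_Sinv: "S1 (hSinv scale q S1 x) = x"
  by (rule Sinv_right[OF S1_add S1_scale quad])
lemma S2_Sinv: "S2 (hSinv scale q S2 x) = x"
  by (rule Sinv_right[OF S2_add S2_scale S2_quad])

lemma TPhi: "T \<Phi> = scale (inverse q * y1) (S2 (S1 \<Phi>))"
proof -
  have "S2 (S1 (hY1 scale q S1 T Ti \<Phi>)) = scale q (T \<Phi>)"
    unfolding hY1_def by (simp add: S1_scale S2_scale S1_Sinv S2_Sinv)
  moreover have "S2 (S1 (hY1 scale q S1 T Ti \<Phi>)) = scale y1 (S2 (S1 \<Phi>))"
    by (simp add: Y1 S1_scale S2_scale)
  ultimately have "scale q (T \<Phi>) = scale y1 (S2 (S1 \<Phi>))" by simp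
  then have "scale (inverse q) (scale q (T \<Phi>)) = scale (inverse q) (scale y1 (S2 (S1 \<Phi>)))" by simp
  then show ?thesis by (simp add: scale_scale q0)
qed

lemma TS1Phi: "T (S1 \<Phi>) = scale y2 (S2 \<Phi>)"
proof -
  have "S2 (hY2 scale q S1 T Ti \<Phi>) = T (S1 \<Phi>)"
    unfolding hY2_def by (simp add: S2_Sinv)
  then show ?thesis by (simp add: Y2 S2_scale)
qed

lemma TS1S2Phi: "T (S1 (S2 \<Phi>)) = scale (q * y3) \<Phi>"
proof -
  have "scale q (hY3 scale q S1 T Ti \<Phi>) = T (S1 (S2 \<Phi>))"
    unfolding hY3_def by (simp add: scale_scale q0)
  then show ?thesis by (simp add: Y3 scale_scale)
qed

lemma T_S2: "T (S2 x) = S1 (T x)"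
  by (simp add: hS2_def TTi)

lemma S1_zero: "S1 0 = 0" using S1_scale[of 0 0] by simp
lemma T_zero: "T 0 = 0" using T_scale[of 0 0] by simp
lemma Ti_zero: "Ti 0 = 0" using Ti_scale[of 0 0] by simp

lemma T_inj0: "T x = 0 \<Longrightarrow> x = 0" using TiT[of x] Ti_zero by simp
lemma S1_inj0: assumes "S1 x = 0" shows "x = 0"
proof -
  have "scale q x = 0" using quad[of x] assms S1_zero by simp
  then have "scale (inverse q) (scale q x) = 0" by simp
  then show ?thesis by (simp add: scale_scale q0)
qed

lemma y1_nz: "y1 \<noteq> 0"
proof
  assume "y1 = 0" then have "T \<Phi> = 0" using TPhi by simp
  then show False using T_inj0 Phi0 by blast
qed
lemma y2_nz: "y2 \<noteq> 0"
proof
  assume "y2 = 0" then have "T (S1 \<Phi>) = 0" using TS1Phi by simp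
  then show False using T_inj0 S1_inj0 Phi0 by blast
qed
lemma y3_nz: "y3 \<noteq> 0"
proof
  assume "y3 = 0" then have "T (S1 (S2 \<Phi>)) = 0" using TS1S2Phi by simp
  then have "S2 \<Phi> = 0" using T_inj0 S1_inj0 by blast
  then have "Ti (S1 (T \<Phi>)) = 0" by (simp add: hS2_def)
  then have "S1 (T \<Phi>) = 0" using TTi[of "S1 (T \<Phi>)"] T_zero by simp
  then show False using T_inj0 S1_inj0 Phi0 by blast
qed

definition B where "B w = hTw S1 T Ti w \<Phi>"
definition comb where "comb a = (\<Sum>w\<in>UNIV. scale (a w) (B w))"

lemma comb_expand: "comb a = scale (a W1) \<Phi> + scale (a Ws1) (S1 \<Phi>) + scale (a Ws2) (S2 \<Phi>)
   + scale (a Ws1s2) (S1 (S2 \<Phi>)) + scale (a Ws2s1) (S2 (S1 \<Phi>)) + scale (a Ws1s2s1) (S1 (S2 (S1 \<Phi>)))"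
  unfolding comb_def sum_s3 B_def by simp

definition Tco where "Tco a = (\<lambda>u. case u of W1 \<Rightarrow> q*y3 * a Ws1s2 | Ws1 \<Rightarrow> q*y3 * a Ws1s2s1
   | Ws2 \<Rightarrow> y2 * a Ws1 | Ws1s2 \<Rightarrow> y2 * a Ws2s1 | Ws2s1 \<Rightarrow> inverse q * y1 * a W1
   | Ws1s2s1 \<Rightarrow> inverse q * y1 * a Ws2)"

definition Tico where "Tico a = (\<lambda>u. case u of W1 \<Rightarrow> inverse (inverse q * y1) * a Ws2s1
   | Ws1 \<Rightarrow> inverse y2 * a Ws2 | Ws2 \<Rightarrow> inverse (inverse q * y1) * a Ws1s2s1
   | Ws1s2 \<Rightarrow> inverse (q*y3) * a W1 | Ws2s1 \<Rightarrow> inverse y2 * a Ws1s2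
   | Ws1s2s1 \<Rightarrow> inverse (q*y3) * a Ws1)"

definition Sco where "Sco a = (\<lambda>u. case u of W1 \<Rightarrow> q * a Ws1 | Ws1 \<Rightarrow> a W1 + (q-1) * a Ws1
   | Ws2 \<Rightarrow> q * a Ws1s2 | Ws1s2 \<Rightarrow> a Ws2 + (q-1) * a Ws1s2
   | Ws2s1 \<Rightarrow> q * a Ws1s2s1 | Ws1s2s1 \<Rightarrow> a Ws2s1 + (q-1) * a Ws1s2s1)"

lemma TB: "T (S2 \<Phi>) = scale (inverse q * y1) (S1 (S2 (S1 \<Phi>)))"
  "T (S2 (S1 \<Phi>)) = scale y2 (S1 (S2 \<Phi>))"
  "T (S1 (S2 (S1 \<Phi>))) = scale (q * y3) (S1 \<Phi>)"
proof -
  show "T (S2 \<Phi>) = scale (inverse q * y1) (S1 (S2 (S1 \<Phi>)))"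
    by (simp add: T_S2 TPhi S1_scale)
  show "T (S2 (S1 \<Phi>)) = scale y2 (S1 (S2 \<Phi>))"
    by (simp add: T_S2 TS1Phi S1_scale)
  show "T (S1 (S2 (S1 \<Phi>))) = scale (q * y3) (S1 \<Phi>)"
    by (simp add: braid T_S2 TS1S2Phi S1_scale)
qed

lemma T_comb: "T (comb a) = comb (Tco a)"
  unfolding comb_expand Tco_def
  by (simp add: T_add T_scale TB TPhi TS1Phi TS1S2Phi scale_scale algebra_simps)

lemma S_comb: "S1 (comb a) = comb (Sco a)"
  unfolding comb_expand Sco_def
  by (simp add: S1_add S1_scale quad scale_scale algebra_simps)

lemma Tco_Tico: "Tco (Tico a) = a"
  by (rule ext, simp add: Tco_def Tico_def q0 y1_nz y2_nz y3_nz field_simps split: s3.split)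

lemma Ti_comb: "Ti (comb a) = comb (Tico a)"
proof -
  have "Ti (comb a) = Ti (T (comb (Tico a)))" by (simp add: T_comb Tco_Tico)
  then show ?thesis by (simp add: TiT)
qed

end

lemma memI: "x = y \<Longrightarrow> y \<in> A \<Longrightarrow> x \<in> A" by simp

locale hk2 = hk +
  fixes OE :: "'a::field set" and b :: bool
  assumes OE_0: "0 \<in> OE" and OE_1: "1 \<in> OE"
  and OE_add: "\<And>x y. x \<in> OE \<Longrightarrow> y \<in> OE \<Longrightarrow> x + y \<in> OE"
  and OE_mult: "\<And>x y. x \<in> OE \<Longrightarrow> y \<in> OE \<Longrightarrow> x * y \<in> OE"
  and OE_m1: "-1 \<in> OE" and OE_q: "q \<in> OE"
  and ord: "ordinary OE q y1 y2 y3"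
  and choice: "(b \<longrightarrow> inverse y2 \<in> OE) \<and> (\<not> b \<longrightarrow> y2 \<in> OE)"
begin

abbreviation "Q \<equiv> qwy b q y1 y2"
abbreviation "L \<equiv> L_lattice scale OE b q y1 y2 S1 T Ti \<Phi>"
abbreviation "HO \<equiv> HO_Phi scale OE S1 T Ti \<Phi>"

lemma Q_nz: "Q w \<noteq> 0"
  by (cases w; cases b; simp add: q0 y1_nz y2_nz)

lemma qm1: "q - 1 \<in> OE"
  using OE_add[OF OE_q OE_m1] by simp

lemma o_r: "y1 * y2 * y3 \<in> OE" and o_ri: "inverse (y1 * y2 * y3) \<in> OE"
  and o_qiy1: "q * inverse y1 \<in> OE" and o_qy2: "q * y2 \<in> OE" and o_qiy2: "q * inverse y2 \<in> OE"
  and o_qiy12: "q * inverse (y1 * y2) \<in> OE" and o_y1: "y1 \<in> OE"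
  using ord unfolding ordinary_def by auto

lemma L_mem: "x \<in> L \<longleftrightarrow> (\<exists>c. (\<forall>w. c w \<in> OE) \<and> x = comb (\<lambda>w. c w * Q w))"
  unfolding L_lattice_def comb_def B_def by auto

lemma L_memI: "\<forall>w. c w \<in> OE \<Longrightarrow> x = comb (\<lambda>w. c w * Q w) \<Longrightarrow> x \<in> L"
  unfolding L_mem by blast

lemma L_stable:
  assumes op: "\<And>a. opr (comb a) = comb (F a)"
    and cf: "\<And>c u. (\<forall>w. c w \<in> OE) \<Longrightarrow> F (\<lambda>w. c w * Q w) u * inverse (Q u) \<in> OE"
    and x: "x \<in> L"
  shows "opr x \<in> L"
proof -
  obtain c where c: "\<forall>w. c w \<in> OE" "x = comb (\<lambda>w. c w * Q w)" using x L_mem by blast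
  define c' where "c' u = F (\<lambda>w. c w * Q w) u * inverse (Q u)" for u
  have "F (\<lambda>w. c w * Q w) = (\<lambda>u. c' u * Q u)"
    by (rule ext) (simp add: c'_def Q_nz)
  then have "opr x = comb (\<lambda>u. c' u * Q u)" using op c by simp
  moreover have "\<forall>u. c' u \<in> OE" using cf c by (simp add: c'_def)
  ultimately show ?thesis unfolding L_mem by blast
qed

lemma OE_cases: "c \<in> OE \<Longrightarrow> x \<in> OE \<Longrightarrow> c * x \<in> OE"
  "c \<in> OE \<Longrightarrow> d \<in> OE \<Longrightarrow> x \<in> OE \<Longrightarrow> c * x + (q - 1) * d \<in> OE"
  "c \<in> OE \<Longrightarrow> d \<in> OE \<Longrightarrow> c + (q - 1) * d \<in> OE"
  using OE_mult OE_add qm1 by auto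

lemma T_cf: assumes c: "\<forall>w. c w \<in> OE" shows "Tco (\<lambda>w. c w * Q w) u * inverse (Q u) \<in> OE"
proof -
  define t where "t = (case u of W1 \<Rightarrow> c Ws1s2 * (y1*y2*y3) | Ws1 \<Rightarrow> c Ws1s2s1 * (y1*y2*y3)
     | Ws2 \<Rightarrow> c Ws1 | Ws1s2 \<Rightarrow> c Ws2s1 | Ws2s1 \<Rightarrow> c W1 | Ws1s2s1 \<Rightarrow> c Ws2)"
  have "Tco (\<lambda>w. c w * Q w) u * inverse (Q u) = t"
    by (cases u; cases b; simp add: t_def Tco_def q0 y1_nz y2_nz y3_nz field_simps)
  moreover have "t \<in> OE"
    by (cases u; simp add: t_def c OE_cases o_r)
  ultimately show ?thesis by simp
qed

lemma Ti_cf: assumes c: "\<forall>w. c w \<in> OE" shows "Tico (\<lambda>w. c w * Q w) u * inverse (Q u) \<in> OE"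
proof -
  define t where "t = (case u of W1 \<Rightarrow> c Ws2s1 | Ws1 \<Rightarrow> c Ws2
     | Ws2 \<Rightarrow> c Ws1s2s1 | Ws1s2 \<Rightarrow> c W1 * inverse (y1*y2*y3) | Ws2s1 \<Rightarrow> c Ws1s2
     | Ws1s2s1 \<Rightarrow> c Ws1 * inverse (y1*y2*y3))"
  have "Tico (\<lambda>w. c w * Q w) u * inverse (Q u) = t"
    by (cases u; cases b; simp add: t_def Tico_def q0 y1_nz y2_nz y3_nz field_simps)
  moreover have "t \<in> OE"
    by (cases u; simp add: t_def c OE_cases o_ri del: inverse_mult_distrib)
  ultimately show ?thesis by simp
qed

lemma S_cf: assumes c: "\<forall>w. c w \<in> OE" shows "Sco (\<lambda>w. c w * Q w) u * inverse (Q u) \<in> OE"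
proof -
  define t where "t = (if b then (case u of W1 \<Rightarrow> c Ws1 * q | Ws1 \<Rightarrow> c W1 + (q - 1) * c Ws1
     | Ws2 \<Rightarrow> c Ws1s2 * y1 | Ws1s2 \<Rightarrow> c Ws2 * (q * inverse y1) + (q - 1) * c Ws1s2
     | Ws2s1 \<Rightarrow> c Ws1s2s1 * (q * y2)
     | Ws1s2s1 \<Rightarrow> c Ws2s1 * inverse y2 + (q - 1) * c Ws1s2s1)
    else (case u of W1 \<Rightarrow> c Ws1 * (q * inverse y2) | Ws1 \<Rightarrow> c W1 * y2 + (q - 1) * c Ws1
     | Ws2 \<Rightarrow> c Ws1s2 * (y1 * y2) | Ws1s2 \<Rightarrow> c Ws2 * (q * inverse (y1 * y2)) + (q - 1) * c Ws1s2
     | Ws2s1 \<Rightarrow> c Ws1s2s1 * q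
     | Ws1s2s1 \<Rightarrow> c Ws2s1 + (q - 1) * c Ws1s2s1))"
  have "Sco (\<lambda>w. c w * Q w) u * inverse (Q u) = t"
    by (cases u; cases b; simp add: t_def Sco_def q0 y1_nz y2_nz y3_nz field_simps)
  moreover have "t \<in> OE"
  proof (cases b)
    case True
    then show ?thesis using choice
      by (cases u; simp add: t_def c OE_cases o_qiy1 o_qy2 o_y1 OE_q)
  next
    case False
    then have "y1 * y2 \<in> OE" using choice o_y1 OE_mult by blast
    then show ?thesis using choice False
      by (cases u; simp add: t_def c OE_cases o_qiy2 o_qiy12 OE_q del: inverse_mult_distrib)
  qed
  ultimately show ?thesis by simp
qed


lemma T_L: "x \<in> L \<Longrightarrow> T x \<in> L"
  by (rule L_stable[where opr=T and F=Tco, OF T_comb T_cf])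
lemma Ti_L: "x \<in> L \<Longrightarrow> Ti x \<in> L"
  by (rule L_stable[where opr=Ti and F=Tico, OF Ti_comb Ti_cf])
lemma S_L: "x \<in> L \<Longrightarrow> S1 x \<in> L"
  by (rule L_stable[where opr=S1 and F=Sco, OF S_comb S_cf])

lemma comb_add: "comb a + comb a' = comb (\<lambda>w. a w + a' w)"
  unfolding comb_def by (simp add: sum.distrib scale_left_distrib)
lemma comb_scale: "scale k (comb a) = comb (\<lambda>w. k * a w)"
  unfolding comb_def by (simp add: scale_sum_right scale_scale)

lemma L_add: "x \<in> L \<Longrightarrow> y \<in> L \<Longrightarrow> x + y \<in> L"
proof -
  assume x: "x \<in> L" and y: "y \<in> L"
  obtain c where c: "\<forall>w. c w \<in> OE" "x = comb (\<lambda>w. c w * Q w)" using x unfolding L_mem by blast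
  obtain d where d: "\<forall>w. d w \<in> OE" "y = comb (\<lambda>w. d w * Q w)" using y unfolding L_mem by blast
  have "x + y = comb (\<lambda>w. c w * Q w + d w * Q w)" using c d by (simp only: comb_add)
  also have "(\<lambda>w. c w * Q w + d w * Q w) = (\<lambda>w. (c w + d w) * Q w)" by (simp add: distrib_right)
  finally have e: "x + y = comb (\<lambda>w. (c w + d w) * Q w)" .
  have m: "\<forall>w. c w + d w \<in> OE" using c d OE_add by blast
  show ?thesis by (rule L_memI[OF m e])
qed

lemma L_scale: "k \<in> OE \<Longrightarrow> x \<in> L \<Longrightarrow> scale k x \<in> L"
proof -
  assume k: "k \<in> OE" "x \<in> L"
  obtain c where c: "\<forall>w. c w \<in> OE" "x = comb (\<lambda>w. c w * Q w)" using k(2) unfolding L_mem by blast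
  have "scale k x = comb (\<lambda>w. k * (c w * Q w))" using c by (simp only: comb_scale)
  then have e: "scale k x = comb (\<lambda>w. (k * c w) * Q w)" by (simp add: mult.assoc)
  have m: "\<forall>w. k * c w \<in> OE" using c k OE_mult by blast
  show ?thesis by (rule L_memI[OF m e])
qed

lemma Phi_L: "\<Phi> \<in> L"
proof -
  have e: "\<Phi> = comb (\<lambda>w. (if w = W1 then 1 else 0) * Q w)"
    by (simp add: comb_expand)
  have m: "\<forall>w. (if w = W1 then (1::'a) else 0) \<in> OE" using OE_0 OE_1 by simp
  show ?thesis by (rule L_memI[OF m e])
qed

lemma orbit_L: "x \<in> orbit_vecs S1 T Ti \<Phi> \<Longrightarrow> x \<in> L"
  by (induction rule: orbit_vecs.induct) (auto simp: Phi_L S_L T_L Ti_L)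

lemma zero_L: "0 \<in> L"
  using L_scale[OF OE_0 Phi_L] by simp

lemma HO_sub_L: "x \<in> HO \<Longrightarrow> x \<in> L"
  unfolding HO_Phi_def
  by (induction rule: O_span.induct) (auto simp: zero_L L_scale orbit_L L_add)

lemma Ospan_scale: "x \<in> O_span scale OE X \<Longrightarrow> a \<in> OE \<Longrightarrow> scale a x \<in> O_span scale OE X"
proof (induction rule: O_span.induct)
  case zero then show ?case by (simp add: O_span.zero)
next
  case (smul b x) then show ?case using OE_mult[of a b] O_span.smul[of "a * b" OE x X scale] by (simp add: scale_scale)
next
  case (add x y) then show ?case by (simp add: scale_right_distrib O_span.add)
qed

lemma orb_in: "x \<in> orbit_vecs S1 T Ti \<Phi> \<Longrightarrow> k \<in> OE \<Longrightarrow> scale k x \<in> HO"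
  unfolding HO_Phi_def by (rule O_span.smul)

lemma orb_in1: "x \<in> orbit_vecs S1 T Ti \<Phi> \<Longrightarrow> x \<in> HO"
  using orb_in[OF _ OE_1] by simp

lemma TT: "T (T \<Phi>) = scale (inverse q * y1 * y2) (S1 (S2 \<Phi>))"
  by (simp add: TPhi T_scale TB scale_scale mult_ac)

lemma e_in: "scale (Q w) (B w) \<in> HO"
proof -
  have o1: "\<Phi> \<in> orbit_vecs S1 T Ti \<Phi>" by (rule orbit_vecs.base)
  have o2: "T \<Phi> \<in> orbit_vecs S1 T Ti \<Phi>" by (rule orbit_vecs.stepT[OF o1])
  have o3: "T (T \<Phi>) \<in> orbit_vecs S1 T Ti \<Phi>" by (rule orbit_vecs.stepT[OF o2])
  have o4: "S1 \<Phi> \<in> orbit_vecs S1 T Ti \<Phi>" by (rule orbit_vecs.stepS[OF o1])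
  have o5: "T (S1 \<Phi>) \<in> orbit_vecs S1 T Ti \<Phi>" by (rule orbit_vecs.stepT[OF o4])
  have o6: "T (T (S1 \<Phi>)) \<in> orbit_vecs S1 T Ti \<Phi>" by (rule orbit_vecs.stepT[OF o5])
  have o7: "S1 (T \<Phi>) \<in> orbit_vecs S1 T Ti \<Phi>" by (rule orbit_vecs.stepS[OF o2])
  have o8: "T (S1 (T \<Phi>)) \<in> orbit_vecs S1 T Ti \<Phi>" by (rule orbit_vecs.stepT[OF o7])
  have o9: "T (T (S1 (T \<Phi>))) \<in> orbit_vecs S1 T Ti \<Phi>" by (rule orbit_vecs.stepT[OF o8])
  have TS1T: "T (S1 (T \<Phi>)) = scale (y1 * y3) (S1 \<Phi>)"
  proof -
    have c: "inverse q * y1 * (q * y3) = y1 * y3" using q0 by (simp add: field_simps)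
    show ?thesis by (simp add: TPhi S1_scale T_scale TB scale_scale c)
  qed
  have TTS1T: "T (T (S1 (T \<Phi>))) = scale (y1 * y2 * y3) (S2 \<Phi>)"
    by (simp add: TS1T T_scale TS1Phi scale_scale mult_ac)
  show ?thesis
  proof (cases b)
    case True
    show ?thesis
    proof (cases w)
      case W1 then show ?thesis using True o1 orb_in1 by (simp add: B_def)
    next
      case Ws1 then show ?thesis using True o4 orb_in1 by (simp add: B_def)
    next
      case Ws2 then show ?thesis using True o5 orb_in1 by (simp add: B_def TS1Phi)
    next
      case Ws1s2 then show ?thesis using True o3 orb_in1 by (simp add: B_def TT)
    next
      case Ws2s1 then show ?thesis using True o2 orb_in1 by (simp add: B_def TPhi)
    next
      case Ws1s2s1 
      have "T (T (S1 \<Phi>)) = scale (inverse q * y1 * y2) (S1 (S2 (S1 \<Phi>)))"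
        by (simp add: TS1Phi T_scale TB scale_scale mult_ac)
      then show ?thesis using Ws1s2s1 True o6 orb_in1 by (simp add: B_def)
    qed
  next
    case False
    have ri: "inverse (y1*y2*y3) \<in> OE" by (rule o_ri)
    show ?thesis
    proof (cases w)
      case W1 then show ?thesis using False o1 orb_in1 by (simp add: B_def)
    next
      case Ws1
      have "scale (inverse (y1*y2*y3)) (T (S1 (T \<Phi>))) = scale (inverse y2) (S1 \<Phi>)"
      proof -
        have c: "inverse (y1*y2*y3) * (y1 * y3) = inverse y2" using y1_nz y3_nz by (simp add: field_simps)
        show ?thesis by (simp add: TS1T scale_scale c del: inverse_mult_distrib)
      qed
      then show ?thesis using Ws1 False orb_in[OF o8 ri] by (simp add: B_def)
    next
      case Ws2
      have "scale (inverse (y1*y2*y3)) (T (T (S1 (T \<Phi>)))) = S2 \<Phi>"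
      proof -
        have c: "inverse (y1*y2*y3) * (y1*y2*y3) = 1" using y1_nz y2_nz y3_nz by (simp del: inverse_mult_distrib)
        show ?thesis by (simp add: TTS1T scale_scale c del: inverse_mult_distrib)
      qed
      then show ?thesis using Ws2 False orb_in[OF o9 ri] by (simp add: B_def)
    next
      case Ws1s2 then show ?thesis using False o3 orb_in1 by (simp add: B_def TT)
    next
      case Ws2s1 then show ?thesis using False o2 orb_in1 by (simp add: B_def TPhi)
    next
      case Ws1s2s1 then show ?thesis using False o7 orb_in1 by (simp add: B_def TPhi S1_scale)
    qed
  qed
qed

lemma L_sub_HO: "x \<in> L \<Longrightarrow> x \<in> HO"
proof -
  assume x: "x \<in> L"
  obtain c where c: "\<forall>w. c w \<in> OE" "x = comb (\<lambda>w. c w * Q w)" using x unfolding L_mem by blast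
  have eq: "x = (\<Sum>w\<in>UNIV. scale (c w) (scale (Q w) (B w)))"
    using c(2) unfolding comb_def by (simp add: scale_scale)
  have t: "scale (c w) (scale (Q w) (B w)) \<in> HO" for w
    unfolding HO_Phi_def using Ospan_scale[OF e_in[unfolded HO_Phi_def] c(1)[rule_format]] .
  show ?thesis unfolding eq sum_s3 HO_Phi_def by (intro O_span.add t[unfolded HO_Phi_def])
qed

lemma main: "L = HO \<and> (\<forall>x\<in>L. S1 x \<in> L \<and> T x \<in> L \<and> Ti x \<in> L)"
  using L_sub_HO HO_sub_L S_L T_L Ti_L by blast

end

lemma val_facts:
  assumes E: "p_adic_local_field v p"
  defines "R \<equiv> ring_of_integers v"
  shows "0 \<in> R" "1 \<in> R" "-1 \<in> R"
    "\<And>x y. x \<in> R \<Longrightarrow> y \<in> R \<Longrightarrow> x + y \<in> R"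
    "\<And>x y. x \<in> R \<Longrightarrow> y \<in> R \<Longrightarrow> x * y \<in> R"
proof -
  have mul: "\<And>x y. x \<noteq> 0 \<Longrightarrow> y \<noteq> 0 \<Longrightarrow> v (x * y) = v x + v y"
    and ad: "\<And>x y. x \<noteq> 0 \<Longrightarrow> y \<noteq> 0 \<Longrightarrow> x + y \<noteq> 0 \<Longrightarrow> v (x + y) \<ge> min (v x) (v y)"
    using E unfolding p_adic_local_field_def by auto
  have v1: "v 1 = 0" using mul[of 1 1] by simp
  have "v 1 = v (-1) + v (-1)" using mul[of "-1" "-1"] by simp
  then have vm1: "v (-1) = 0" using v1 by simp
  show "0 \<in> R" "1 \<in> R" "-1 \<in> R" unfolding R_def ring_of_integers_def using v1 vm1 by auto
  show "x * y \<in> R" if "x \<in> R" "y \<in> R" for x y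
  proof (cases "x = 0 \<or> y = 0")
    case True then show ?thesis unfolding R_def ring_of_integers_def by auto
  next
    case False
    then have "v x \<ge> 0" "v y \<ge> 0" using that unfolding R_def ring_of_integers_def by auto
    moreover have "v (x * y) = v x + v y" using False mul by blast
    ultimately show ?thesis unfolding R_def ring_of_integers_def by simp
  qed
  show "x + y \<in> R" if "x \<in> R" "y \<in> R" for x y
  proof (cases "x = 0 \<or> y = 0 \<or> x + y = 0")
    case True then show ?thesis using that unfolding R_def ring_of_integers_def by auto
  next
    case False
    then have "v x \<ge> 0" "v y \<ge> 0" using that unfolding R_def ring_of_integers_def by auto
    moreover have "v (x + y) \<ge> min (v x) (v y)" using False ad by blast
    ultimately have "v (x + y) \<ge> 0" by linarith
    then show ?thesis unfolding R_def ring_of_integers_def by simp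
  qed
qed

lemma of_nat_in:
  assumes "0 \<in> R" "1 \<in> R" "\<And>x y. x \<in> R \<Longrightarrow> y \<in> R \<Longrightarrow> x + y \<in> R"
  shows "of_nat n \<in> R"
  by (induction n) (use assms in auto)

theorem proposition3:
  fixes v :: "'e::field_char_0 \<Rightarrow> int" and p f :: nat
    and scale :: "'e \<Rightarrow> 'm::ab_group_add \<Rightarrow> 'm"
    and S1 T Ti :: "'m \<Rightarrow> 'm" and \<Phi> :: 'm
    and y1 y2 y3 :: 'e and b :: bool
  defines "OE \<equiv> ring_of_integers v"
    and "qE \<equiv> (of_nat (p ^ f) :: 'e)"
  assumes E: "p_adic_local_field v p"
    and f: "f \<ge> 1"
    and H: "hecke_module scale qE S1 T Ti"
    and Y1: "hY1 scale qE S1 T Ti \<Phi> = scale y1 \<Phi>"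
    and Y2: "hY2 scale qE S1 T Ti \<Phi> = scale y2 \<Phi>"
    and Y3: "hY3 scale qE S1 T Ti \<Phi> = scale y3 \<Phi>"
    and basis: "\<forall>x. \<exists>!c. x = (\<Sum>w\<in>UNIV. scale (c w) (hTw S1 T Ti w \<Phi>))"
    and ord: "ordinary OE qE y1 y2 y3"
    and choice: "(b \<longrightarrow> inverse y2 \<in> OE) \<and> (\<not> b \<longrightarrow> y2 \<in> OE)"
  shows "L_lattice scale OE b qE y1 y2 S1 T Ti \<Phi> = HO_Phi scale OE S1 T Ti \<Phi>
       \<and> (\<forall>x \<in> L_lattice scale OE b qE y1 y2 S1 T Ti \<Phi>.
            S1 x \<in> L_lattice scale OE b qE y1 y2 S1 T Ti \<Phi> \<and>
            T x \<in> L_lattice scale OE b qE y1 y2 S1 T Ti \<Phi> \<and>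
            Ti x \<in> L_lattice scale OE b qE y1 y2 S1 T Ti \<Phi>)"
proof -
  have vs: "vector_space scale" and h1: "module_hom scale scale S1"
    and h2: "module_hom scale scale T" and h3: "module_hom scale scale Ti"
    and TTi: "\<forall>x. T (Ti x) = x" and TiT: "\<forall>x. Ti (T x) = x"
    and quad: "\<forall>x. S1 (S1 x) = scale (qE - 1) (S1 x) + scale qE x"
    and braid: "\<forall>x. S1 (hS2 S1 T Ti (S1 x)) = hS2 S1 T Ti (S1 (hS2 S1 T Ti x))"
    using H unfolding hecke_module_def by auto
  have pp: "prime p" using E unfolding p_adic_local_field_def by auto
  have q0: "qE \<noteq> 0" unfolding qE_def using pp by (simp add: prime_gt_0_nat)
  have z1: "S1 0 = 0" using module_hom.zero[OF h1] .
  have z2: "T 0 = 0" using module_hom.zero[OF h2] .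
  have z3: "Ti 0 = 0" using module_hom.zero[OF h3] .
  have vsz: "scale a 0 = 0" for a
    using module.scale_zero_right[OF vs[folded module_iff_vector_space]] .
  have Phi0: "\<Phi> \<noteq> 0"
  proof
    assume P: "\<Phi> = 0"
    have hz: "hTw S1 T Ti w \<Phi> = 0" for w
      by (cases w) (simp_all add: P z1 z2 z3 hS2_def)
    obtain c0 where "\<forall>c. (0::'m) = (\<Sum>w\<in>UNIV. scale (c w) (hTw S1 T Ti w \<Phi>)) \<longrightarrow> c = c0"
      using basis by blast
    then have "(\<lambda>w. 0::'e) = c0" "(\<lambda>w. 1::'e) = c0" by (simp_all add: hz vsz)
    then show False by (metis zero_neq_one)
  qed
  have OEf: "0 \<in> OE" "1 \<in> OE" "-1 \<in> OE"
    "\<And>x y. x \<in> OE \<Longrightarrow> y \<in> OE \<Longrightarrow> x + y \<in> OE"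
    "\<And>x y. x \<in> OE \<Longrightarrow> y \<in> OE \<Longrightarrow> x * y \<in> OE"
    using val_facts[OF E] unfolding OE_def by auto
  have OEq: "qE \<in> OE" unfolding qE_def by (rule of_nat_in[OF OEf(1,2,4)])
  interpret hk2 scale qE S1 T Ti \<Phi> y1 y2 y3 OE b
  proof (unfold_locales)
    show "S1 (x + y) = S1 x + S1 y" for x y by (rule module_hom.add[OF h1])
    show "S1 (scale a x) = scale a (S1 x)" for a x by (rule module_hom.scale[OF h1])
    show "T (x + y) = T x + T y" for x y by (rule module_hom.add[OF h2])
    show "T (scale a x) = scale a (T x)" for a x by (rule module_hom.scale[OF h2])
    show "Ti (x + y) = Ti x + Ti y" for x y by (rule module_hom.add[OF h3])
    show "Ti (scale a x) = scale a (Ti x)" for a x by (rule module_hom.scale[OF h3])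
  qed (use vs[unfolded vector_space_def] TTi TiT quad braid q0 Y1 Y2 Y3 Phi0 OEf OEq ord choice in auto)
  show ?thesis by (rule main)
qed

end
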